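(* Let $u^a_i,u^b_i\in[0,1]$ ($i\in[m]$) be the utilities of two agents $a,b$ for $m$ items, and suppose $\mathrm{OptEnvy}\le-\Delta$ for some $\Delta>0$. Then for all $c>0$, $\sum_{i=1}^m|cu^a_i-u^b_i|\ge(1+c)\Delta$.
   Context: Utilities are additive. An allocation is a partition $(\mathcal{A}_a,\mathcal{A}_b)$ of $[m]$; $\mathrm{Envy}_{a\to b}=\sum_{i\in\mathcal{A}_b}u^a_i-\sum_{i\in\mathcal{A}_a}u^a_i$, $\mathrm{Envy}_{b\to a}=\sum_{i\in\mathcal{A}_a}u^b_i-\sum_{i\in\mathcal{A}_b}u^b_i$, $\mathrm{Envy}=\max\{\mathrm{Envy}_{a\to b},\mathrm{Envy}_{b\to a}\}$, and $\mathrm{OptEnvy}=\min$ of $\mathrm{Envy}$ over all allocations. *)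

theory Defs
  imports Complex_Main
begin

text \<open>Items are 0,...,m-1. An allocation (A_a, A_b) is a partition of the items;
  it is determined by A_a (a subset of the items), with A_b the complement.\<close>

definition envy_ab :: "nat \<Rightarrow> (nat \<Rightarrow> real) \<Rightarrow> nat set \<Rightarrow> real" where
  "envy_ab m ua Aa = (\<Sum>i\<in>{..<m} - Aa. ua i) - (\<Sum>i\<in>Aa. ua i)"

definition envy_ba :: "nat \<Rightarrow> (nat \<Rightarrow> real) \<Rightarrow> nat set \<Rightarrow> real" where
  "envy_ba m ub Aa = (\<Sum>i\<in>Aa. ub i) - (\<Sum>i\<in>{..<m} - Aa. ub i)"

definition envy :: "nat \<Rightarrow> (nat \<Rightarrow> real) \<Rightarrow> (nat \<Rightarrow> real) \<Rightarrow> nat set \<Rightarrow> real" where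
  "envy m ua ub Aa = max (envy_ab m ua Aa) (envy_ba m ub Aa)"

definition opt_envy :: "nat \<Rightarrow> (nat \<Rightarrow> real) \<Rightarrow> (nat \<Rightarrow> real) \<Rightarrow> real" where
  "opt_envy m ua ub = Min (envy m ua ub ` Pow {..<m})"

end

theory Submission
  imports Defs
begin

theorem lemma10:
  fixes m :: nat and ua ub :: "nat \<Rightarrow> real" and \<Delta> c :: real
  assumes "\<forall>i<m. 0 \<le> ua i \<and> ua i \<le> 1"
    and "\<forall>i<m. 0 \<le> ub i \<and> ub i \<le> 1"
    and "\<Delta> > 0"
    and "opt_envy m ua ub \<le> - \<Delta>"
    and "c > 0"
  shows "(\<Sum>i<m. \<bar>c * ua i - ub i\<bar>) \<ge> (1 + c) * \<Delta>"
proof -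
  have fin: "finite (envy m ua ub ` Pow {..<m})" by simp
  have ne: "envy m ua ub ` Pow {..<m} \<noteq> {}" by blast
  have "opt_envy m ua ub \<in> envy m ua ub ` Pow {..<m}"
    unfolding opt_envy_def using Min_in[OF fin ne] .
  then obtain A where A: "A \<subseteq> {..<m}" and eA: "envy m ua ub A = opt_envy m ua ub" by auto
  let ?B = "{..<m} - A"
  have finA: "finite A" using A finite_subset by blast
  have e1: "(\<Sum>i\<in>?B. ua i) - (\<Sum>i\<in>A. ua i) \<le> - \<Delta>"
    using eA assms(4) unfolding envy_def envy_ab_def by linarith
  have e2: "(\<Sum>i\<in>A. ub i) - (\<Sum>i\<in>?B. ub i) \<le> - \<Delta>"
    using eA assms(4) unfolding envy_def envy_ba_def by linarith
  have split: "(\<Sum>i<m. \<bar>c * ua i - ub i\<bar>) = (\<Sum>i\<in>A. \<bar>c * ua i - ub i\<bar>) + (\<Sum>i\<in>?B. \<bar>c * ua i - ub i\<bar>)"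
    by (metis A add.commute finite_lessThan sum.subset_diff)
  have s1: "(\<Sum>i\<in>A. \<bar>c * ua i - ub i\<bar>) \<ge> (\<Sum>i\<in>A. c * ua i - ub i)"
    by (rule sum_mono) simp
  have s2: "(\<Sum>i\<in>?B. \<bar>c * ua i - ub i\<bar>) \<ge> (\<Sum>i\<in>?B. ub i - c * ua i)"
    by (rule sum_mono) simp
  have t1: "(\<Sum>i\<in>A. c * ua i - ub i) = c * (\<Sum>i\<in>A. ua i) - (\<Sum>i\<in>A. ub i)"
    by (simp add: sum_subtractf sum_distrib_left)
  have t2: "(\<Sum>i\<in>?B. ub i - c * ua i) = (\<Sum>i\<in>?B. ub i) - c * (\<Sum>i\<in>?B. ua i)"
    by (simp add: sum_subtractf sum_distrib_left)
  have "c * ((\<Sum>i\<in>A. ua i) - (\<Sum>i\<in>?B. ua i)) \<ge> c * \<Delta>"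
    using e1 assms(5) by (intro mult_left_mono) auto
  then show ?thesis using split s1 s2 t1 t2 e2 by (simp add: algebra_simps)
qed

end
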